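(* Let $U\subseteq\mathcal{B}$ be a maximal avoidable set containing an element $(a,0)$ with $a\ge 1$. Then there is an odd integer $d<a$ such that $U=\{(a,0),(0,0)\}\cup\{(c,d)\in\mathcal{B}\mid \max\{c,c+d\}<a\}$.
   Context: The bicyclic inverse semigroup is $\mathcal{B}=\{(a,b)\in\mathbb{Z}\times\mathbb{Z}\mid a\ge 0,\ a+b\ge 0\}$ with multiplication $(a,b)(c,d)=(\max\{c+d,a\}-d,\ b+d)$. A subset $U\subseteq\mathcal{B}$ is called avoidable if $\mathcal{B}$ can be partitioned into two subsets $A$ and $B$ such that no element of $U$ can be written as a product $xy$ of two distinct elements $x\neq y$ both in $A$, or both in $B$. A maximal avoidable set is an avoidable set not properly contained in any other avoidable subset of $\mathcal{B}$. *)

theory Defs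
  imports Main
begin

definition bicyclic :: "(int \<times> int) set" where
  "bicyclic = {(a, b). a \<ge> 0 \<and> a + b \<ge> 0}"

fun bmult :: "int \<times> int \<Rightarrow> int \<times> int \<Rightarrow> int \<times> int" where
  "bmult (a, b) (c, d) = (max (c + d) a - d, b + d)"

definition avoidable :: "(int \<times> int) set \<Rightarrow> bool" where
  "avoidable U \<longleftrightarrow> U \<subseteq> bicyclic \<and>
     (\<exists>A B. A \<union> B = bicyclic \<and> A \<inter> B = {} \<and>
        (\<forall>x\<in>A. \<forall>y\<in>A. x \<noteq> y \<longrightarrow> bmult x y \<notin> U) \<and>
        (\<forall>x\<in>B. \<forall>y\<in>B. x \<noteq> y \<longrightarrow> bmult x y \<notin> U))"

definition maximal_avoidable :: "(int \<times> int) set \<Rightarrow> bool" where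
  "maximal_avoidable U \<longleftrightarrow> avoidable U \<and>
     (\<forall>V. avoidable V \<and> U \<subseteq> V \<longrightarrow> V = U)"

end

theory Submission
  imports Defs
begin

definition hcol :: "int \<Rightarrow> int \<Rightarrow> bool" where
  "hcol d t = (if d dvd t then t div d > 0 else odd (t mod d))"

lemma hcol_0: "\<not> hcol d 0" by (simp add: hcol_def)

lemma hcol_neg:
  assumes "odd d" "t \<noteq> 0" shows "hcol d (-t) \<noteq> hcol d t"
proof (cases "d dvd t")
  case True
  then obtain k where k: "t = d * k" by blast
  have d0: "d \<noteq> 0" using assms(1) by auto
  have "k \<noteq> 0" using k assms(2) by auto
  have "t div d = k" using k d0 by simp
  moreover have "(-t) div d = -k" using k d0
    by (metis minus_mult_right nonzero_mult_div_cancel_left)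
  ultimately show ?thesis using True \<open>k\<noteq>0\<close> by (auto simp: hcol_def)
next
  case False
  have "(-t) mod d = d - t mod d" using False by (simp add: zmod_zminus1_eq_if dvd_eq_mod_eq_0)
  then show ?thesis using False assms(1) by (auto simp: hcol_def)
qed

lemma hcol_refl:
  assumes "odd d" shows "hcol d (d - t) \<noteq> hcol d t"
proof (cases "d dvd t")
  case True
  then obtain k where k: "t = d * k" by blast
  have d0: "d \<noteq> 0" using assms(1) by auto
  have "t div d = k" using k d0 by simp
  moreover have "d - t = d * (1 - k)" using k by (simp add: algebra_simps)
  moreover have "(d - t) div d = 1 - k" using k d0 \<open>d - t = d * (1 - k)\<close> by simp
  ultimately show ?thesis using True by (auto simp: hcol_def)
next
  case False
  have "(-t) mod d = d - t mod d" using False by (simp add: zmod_zminus1_eq_if dvd_eq_mod_eq_0)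
  moreover have "(d - t) mod d = (-t) mod d" by (metis diff_conv_add_uminus add.commute mod_add_self2)
  moreover have "\<not> d dvd (d - t)"
  proof
    assume "d dvd d - t"
    then have "d dvd d - (d - t)" using dvd_diff dvd_refl by blast
    then show False using False by simp
  qed
  ultimately show ?thesis using False assms(1) by (auto simp: hcol_def)
qed

lemma V_avoidable:
  assumes d: "odd d" and a: "a \<ge> 1"
  shows "avoidable ({(a, 0), (0, 0)} \<union> {(c, e). (c, e) \<in> bicyclic \<and> max c (c + e) < a \<and> e = d})"
    (is "avoidable ?V")
proof -
  define f where "f = (\<lambda>(s::int, t::int). if t = 0 then s = a else hcol d t)"
  have key: "f (s,t) \<noteq> f (u,v)"
    if st: "(s,t) \<in> bicyclic" and uv: "(u,v) \<in> bicyclic" and ne: "(s,t) \<noteq> (u,v)"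
       and m: "bmult (s,t) (u,v) \<in> ?V" for s t u v
  proof -
    have s0: "s \<ge> 0" "s + t \<ge> 0" using st by (auto simp: bicyclic_def)
    have u0: "u \<ge> 0" "u + v \<ge> 0" using uv by (auto simp: bicyclic_def)
    have prod: "bmult (s,t) (u,v) = (max (u+v) s - v, t + v)" by simp
    consider (A) "bmult (s,t) (u,v) = (a,0)" | (O) "bmult (s,t) (u,v) = (0,0)"
      | (S) "max (max (u+v) s - v) (max (u+v) s - v + (t+v)) < a" "t + v = d"
      using m prod by auto
    then show ?thesis
    proof cases
      case A
      then have tv: "v = -t" and mx: "max (u+v) s - v = a" by auto
      show ?thesis
      proof (cases "t = 0")
        case True
        then have "v = 0" using tv by simp
        then have "s \<noteq> u" using ne True by auto
        then have "(s = a) \<noteq> (u = a)" using mx \<open>v = 0\<close> by (auto simp: max_def split: if_splits)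
        then show ?thesis using True \<open>v=0\<close> by (simp add: f_def)
      next
        case False
        then show ?thesis using tv hcol_neg[OF d False] by (simp add: f_def)
      qed
    next
      case O
      then have tv: "v = -t" and mx: "max (u+v) s - v = 0" by auto
      show ?thesis
      proof (cases "t = 0")
        case True
        then have "v = 0" using tv by simp
        then have "s = 0" "u = 0" using mx s0 u0 by (auto simp: max_def split: if_splits)
        then show ?thesis using ne True \<open>v=0\<close> by simp
      next
        case False
        then show ?thesis using tv hcol_neg[OF d False] by (simp add: f_def)
      qed
    next
      case S
      have fx: "f (s,t) = hcol d t"
      proof (cases "t = 0")
        case True
        then have "s < a" using S by (auto simp: max_def split: if_splits)
        then show ?thesis using True by (simp add: f_def hcol_0)
      qed (simp add: f_def)
      have fy: "f (u,v) = hcol d v"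
      proof (cases "v = 0")
        case True
        then have "u < a" using S by (auto simp: max_def split: if_splits)
        then show ?thesis using True by (simp add: f_def hcol_0)
      qed (simp add: f_def)
      have "v = d - t" using S by simp
      then show ?thesis using fx fy hcol_refl[OF d, of t] by simp
    qed
  qed
  define A where "A = {x \<in> bicyclic. f x}"
  define B where "B = {x \<in> bicyclic. \<not> f x}"
  have sub: "?V \<subseteq> bicyclic" using a by (auto simp: bicyclic_def)
  have "\<forall>x\<in>A. \<forall>y\<in>A. x \<noteq> y \<longrightarrow> bmult x y \<notin> ?V"
    using key unfolding A_def by fastforce
  moreover have "\<forall>x\<in>B. \<forall>y\<in>B. x \<noteq> y \<longrightarrow> bmult x y \<notin> ?V"
    using key unfolding B_def by fastforce
  moreover have "A \<union> B = bicyclic" "A \<inter> B = {}" unfolding A_def B_def by auto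
  ultimately show ?thesis using sub unfolding avoidable_def by blast
qed

locale colored =
  fixes U :: "(int \<times> int) set" and f :: "int \<times> int \<Rightarrow> bool" and a :: int
  assumes edge: "\<And>x y. x \<in> bicyclic \<Longrightarrow> y \<in> bicyclic \<Longrightarrow> x \<noteq> y \<Longrightarrow> bmult x y \<in> U \<Longrightarrow> f x \<noteq> f y"
    and ea: "(a,0) \<in> U" and a1: "a \<ge> 1"
begin

definition H where "H t = f (if t \<ge> 0 then 0 else -t, t)"

lemma region:
  assumes b: "(s,t) \<in> bicyclic" and p: "t > 0 \<Longrightarrow> s \<le> a" and n: "t < 0 \<Longrightarrow> s + t \<le> a"
    and z: "t = 0 \<Longrightarrow> s < a"
  shows "f (s,t) = H t"
proof -
  have s0: "s \<ge> 0" "s + t \<ge> 0" using b by (auto simp: bicyclic_def)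
  consider "t > 0" | "t < 0" | "t = 0" by linarith
  then show ?thesis
  proof cases
    case 1
    let ?z = "(a+t, -t)"
    have zb: "?z \<in> bicyclic" using a1 1 by (auto simp: bicyclic_def)
    have "bmult ?z (s,t) = (a,0)" using p[OF 1] by (simp add: max_def)
    then have e1: "f ?z \<noteq> f (s,t)" using edge[OF zb b] 1 ea by auto
    have "bmult ?z (0,t) = (a,0)" using a1 by (simp add: max_def)
    moreover have "(0,t) \<in> bicyclic" using 1 by (auto simp: bicyclic_def)
    ultimately have e2: "f ?z \<noteq> f (0,t)" using edge[OF zb] 1 ea by auto
    show ?thesis using e1 e2 1 by (simp add: H_def)
  next
    case 2
    let ?z = "(a, -t)"
    have zb: "?z \<in> bicyclic" using a1 2 by (auto simp: bicyclic_def)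
    have "bmult (s,t) ?z = (a,0)" using n[OF 2] by (simp add: max_def)
    then have e1: "f ?z \<noteq> f (s,t)" using edge[OF b zb] 2 ea by auto
    have "bmult (-t,t) ?z = (a,0)" using a1 by (simp add: max_def)
    moreover have "(-t,t) \<in> bicyclic" using 2 by (auto simp: bicyclic_def)
    ultimately have e2: "f ?z \<noteq> f (-t,t)" using edge[OF _ zb] 2 ea by auto
    show ?thesis using e1 e2 2 by (simp add: H_def)
  next
    case 3
    let ?z = "(a, 0::int)"
    have zb: "?z \<in> bicyclic" using a1 by (auto simp: bicyclic_def)
    have "bmult (s,t) ?z = (a,0)" using z[OF 3] 3 by (simp add: max_def)
    then have e1: "f ?z \<noteq> f (s,t)" using edge[OF b zb] 3 z[OF 3] ea by auto
    have "bmult (0,0) ?z = (a,0)" using a1 by (simp add: max_def)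
    moreover have "(0,0) \<in> bicyclic" by (auto simp: bicyclic_def)
    ultimately have e2: "f ?z \<noteq> f (0,0)" using edge[OF _ zb] a1 ea by auto
    show ?thesis using e1 e2 3 by (simp add: H_def)
  qed
qed

lemma H0: "H 0 \<noteq> f (a,0)"
  using region[of 0 0] a1 edge[of "(0,0)" "(a,0)"] ea by (auto simp: bicyclic_def H_def)

lemma anti_pos: assumes "t > 0" shows "H t \<noteq> H (-t)"
proof -
  let ?z = "(a+t, -t)"
  have zb: "?z \<in> bicyclic" using a1 assms by (auto simp: bicyclic_def)
  have "f ?z = H (-t)" using region[of "a+t" "-t"] zb assms by auto
  moreover have "bmult ?z (0,t) = (a,0)" using a1 by (simp add: max_def)
  moreover have "(0,t) \<in> bicyclic" using assms by (auto simp: bicyclic_def)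
  moreover have "f (0,t) = H t" using assms by (simp add: H_def)
  ultimately show ?thesis using edge[OF zb, of "(0,t)"] assms ea by auto
qed

lemma anti: assumes "t \<noteq> 0" shows "H t \<noteq> H (-t)"
proof (cases "t > 0")
  case True then show ?thesis by (rule anti_pos)
next
  case False
  then have "-t > 0" using assms by simp
  then show ?thesis using anti_pos[of "-t"] by auto
qed

lemma small_edge:
  assumes w: "(c,d) \<in> U" "(c,d) \<in> bicyclic" "c < a" "c + d < a" and t: "t \<le> c + d"
    and nz: "\<not> (d = 0 \<and> t = 0)"
  shows "H t \<noteq> H (d - t)"
proof -
  have c0: "c \<ge> 0" "c + d \<ge> 0" using w by (auto simp: bicyclic_def)
  let ?x = "(c+d-t, t)" and ?y = "(c, d-t)"
  have xb: "?x \<in> bicyclic" using c0 t by (auto simp: bicyclic_def)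
  have yb: "?y \<in> bicyclic" using c0 t by (auto simp: bicyclic_def)
  have pr: "bmult ?x ?y = (c,d)" by simp
  have ne: "?x \<noteq> ?y" using nz by auto
  have fx: "f ?x = H t" by (rule region) (use xb w in auto)
  have fy: "f ?y = H (d - t)" by (rule region) (use yb w in auto)
  show ?thesis using edge[OF xb yb ne] pr w fx fy by auto
qed

lemma small_edge2:
  assumes w: "(c,d) \<in> U" "(c,d) \<in> bicyclic" "c < a" "c + d < a" and nz: "d \<noteq> 0"
  shows "H t \<noteq> H (d - t)"
proof (cases "t \<le> c + d")
  case True then show ?thesis using small_edge[OF w True] nz by auto
next
  case False
  have c0: "c \<ge> 0" "c + d \<ge> 0" using w by (auto simp: bicyclic_def)
  have "d - t \<le> c + d" using False c0 by linarith
  then show ?thesis using small_edge[OF w, of "d - t"] nz by auto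
qed

lemma claim1:
  assumes w: "(c,d) \<in> U" "(c,d) \<in> bicyclic" "(c,d) \<noteq> (a,0)" "(c,d) \<noteq> (0,0)"
  shows "c < a \<and> c + d < a \<and> odd d"
proof -
  have c0: "c \<ge> 0" "c + d \<ge> 0" using w by (auto simp: bicyclic_def)
  have zb: "(0,0) \<in> bicyclic" and ab: "(a,0) \<in> bicyclic" using a1 by (auto simp: bicyclic_def)
  have "bmult (0,0) (c,d) = (c,d)" using c0 by (simp add: max_def)
  then have f1: "f (0,0) \<noteq> f (c,d)" using edge[OF zb w(2)] w by auto
  have f2: "f (0,0) \<noteq> f (a,0)" using H0 by (simp add: H_def)
  have fc: "f (c,d) = f (a,0)" using f1 f2 by auto
  have ca: "c < a"
  proof (rule ccontr)
    assume "\<not> c < a"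
    then have "bmult (c,d) (a,0) = (c,d)" by (simp add: max_def)
    then show False using edge[OF w(2) ab] w fc by auto
  qed
  have cda: "c + d < a"
  proof (rule ccontr)
    assume "\<not> c + d < a"
    then have "bmult (a,0) (c,d) = (c,d)" by (simp add: max_def)
    then show False using edge[OF ab w(2)] w fc by auto
  qed
  have "odd d"
  proof (rule ccontr)
    assume "\<not> odd d"
    then obtain k where k: "d = 2 * k" by (auto elim: evenE)
    show False
    proof (cases "d = 0")
      case True
      then have "f (c,d) = H 0" using region[OF w(2)] ca by auto
      then show False using f1 True by (simp add: H_def)
    next
      case False
      have "k \<le> c + d" using k c0 by linarith
      then have "H k \<noteq> H (d - k)" using small_edge[OF w(1,2) ca cda] False by auto
      then show False using k by simp
    qed
  qed
  then show ?thesis using ca cda by auto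
qed

lemma claim2:
  assumes w1: "(c1,d1) \<in> U" "(c1,d1) \<in> bicyclic" "c1 < a" "c1 + d1 < a" "odd d1"
    and w2: "(c2,d2) \<in> U" "(c2,d2) \<in> bicyclic" "c2 < a" "c2 + d2 < a" "odd d2"
  shows "d1 = d2"
proof (rule ccontr)
  assume ne: "d1 \<noteq> d2"
  have ev: "even (d2 - d1)" using w1(5) w2(5) by auto
  from ev obtain m where m: "d2 - d1 = 2 * m" by (rule evenE)
  have m0: "m \<noteq> 0" using m ne by auto
  have d10: "d1 \<noteq> 0" "d2 \<noteq> 0" using w1(5) w2(5) by auto
  have e1: "H (-m) \<noteq> H (d1 + m)" using small_edge2[OF w1(1-4) d10(1), of "-m"] by simp
  have e2: "H (d1 + m) \<noteq> H m" using small_edge2[OF w2(1-4) d10(2), of "d1 + m"] m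
    by (simp add: algebra_simps)
  show False using e1 e2 anti[OF m0] by auto
qed

end

theorem proposition5p5:
  fixes U :: "(int \<times> int) set" and a :: int
  assumes "maximal_avoidable U" and "(a, 0) \<in> U" and "a \<ge> 1"
  shows "\<exists>d::int. odd d \<and> d < a \<and>
           U = {(a, 0), (0, 0)} \<union> {(c, e). (c, e) \<in> bicyclic \<and> max c (c + e) < a \<and> e = d}"
proof -
  have av: "avoidable U" and mx: "\<And>V. avoidable V \<Longrightarrow> U \<subseteq> V \<Longrightarrow> V = U"
    using assms(1) unfolding maximal_avoidable_def by auto
  obtain A B where sub: "U \<subseteq> bicyclic" and AB: "A \<union> B = bicyclic" "A \<inter> B = {}"
    and nA: "\<forall>x\<in>A. \<forall>y\<in>A. x \<noteq> y \<longrightarrow> bmult x y \<notin> U"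
    and nB: "\<forall>x\<in>B. \<forall>y\<in>B. x \<noteq> y \<longrightarrow> bmult x y \<notin> U"
    using av unfolding avoidable_def by blast
  interpret colored U "\<lambda>x. x \<in> A" a
  proof
    fix x y assume "x \<in> bicyclic" "y \<in> bicyclic" "x \<noteq> y" "bmult x y \<in> U"
    then show "(x \<in> A) \<noteq> (y \<in> A)" using AB nA nB by blast
  qed (use assms in auto)
  let ?S = "\<lambda>d. {(c, e). (c, e) \<in> bicyclic \<and> max c (c + e) < a \<and> e = d}"
  have gen: "\<And>c e. (c,e) \<in> U \<Longrightarrow> (c,e) \<noteq> (a,0) \<Longrightarrow> (c,e) \<noteq> (0,0) \<Longrightarrow>
      c < a \<and> c + e < a \<and> odd e \<and> (c,e) \<in> bicyclic"
    using claim1 sub by blast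
  show ?thesis
  proof (cases "\<exists>c e. (c,e) \<in> U \<and> (c,e) \<noteq> (a,0) \<and> (c,e) \<noteq> (0,0)")
    case True
    then obtain c0 d where w0: "(c0,d) \<in> U" "(c0,d) \<noteq> (a,0)" "(c0,d) \<noteq> (0,0)" by blast
    have p0: "c0 < a" "c0 + d < a" "odd d" "(c0,d) \<in> bicyclic" using gen[OF w0] by auto
    have dlt: "d < a" using p0 by (auto simp: bicyclic_def)
    have "U \<subseteq> {(a, 0), (0, 0)} \<union> ?S d"
    proof
      fix w assume wU: "w \<in> U"
      obtain c e where w: "w = (c,e)" by fastforce
      show "w \<in> {(a, 0), (0, 0)} \<union> ?S d"
      proof (cases "w = (a,0) \<or> w = (0,0)")
        case False
        then have p: "c < a" "c + e < a" "odd e" "(c,e) \<in> bicyclic" using gen wU w by auto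
        have "e = d" using claim2[OF _ p(4,1,2,3) w0(1) p0(4,1,2,3)] wU w by auto
        then show ?thesis using p w by auto
      qed auto
    qed
    then have "{(a, 0), (0, 0)} \<union> ?S d = U" using mx V_avoidable[OF p0(3) assms(3)] by blast
    then show ?thesis using p0(3) dlt by blast
  next
    case False
    have "U \<subseteq> {(a, 0), (0, 0)} \<union> ?S (-1)" using False by auto
    then have "{(a, 0), (0, 0)} \<union> ?S (-1) = U" using mx V_avoidable[of "-1" a] assms(3) by auto
    then show ?thesis using assms(3) by (intro exI[of _ "-1"]) auto
  qed
qed

end
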